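(* Let $(K,C,S)$ be the associated layered complex of a divided simplicial complex. If $(K,C,S)$ admits no $S$-collapse and $(K',C,S)$ is obtained from $(K,C,S)$ by an intermediate collapse, then $(K',C,S)$ still does not admit an $S$-collapse.
   Context: A simplicial complex $K$ is a set of finite nonempty sets (simplices) closed under passing to nonempty subsets (faces); $K^0$ is its vertex set; $t<s$ means $t$ is a proper face of $s$. A simplex is principal in $K$ if it is not a proper face of any simplex of $K$; $s$ is free in $K$ if it is a proper face of a principal simplex $p$ and of no other simplex of $K$. A layered simplicial complex is $(K,C,S)$ with $C,S$ disjoint subcomplexes; $\mathrm{IM}(K,C,S)$ denotes simplices in neither $C$ nor $S$. A divided simplicial complex is $(K,S^0)$, $S^0\subseteq K^0$; its associated layered complex has $S$ = simplices with all vertices in $S^0$, $C$ = simplices with all vertices in $K^0-S^0$. $(K,C,S)$ admits an $S$-collapse if there exist $p\in S$ principal in $K$ and a face $s$ of $p$ free in $K$ (the elementary $S$-collapse then yields $(K-\{s,p\},C,S-\{s,p\})$). For $(K,C,S)$ associated to a divided complex $(K,S^0)$, an elementary intermediate collapse replaces it by $(K-\{s,p\},C,S)$ where (i) $p\in\mathrm{IM}(K,C,S)$, (ii) $p$ is principal in $K$, (iii) $s$ is a face of $p$ free in $K$, (iv) every $t\in S$ with $t<p$ satisfies $t<s$; the result is again the layered complex associated to the divided complex $(K-\{s,p\},S^0)$. An intermediate collapse is a finite sequence of elementary intermediate collapses. *)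

theory Defs
  imports Main
begin

definition simplicial_complex :: "'v set set \<Rightarrow> bool" where
  "simplicial_complex K \<longleftrightarrow>
     (\<forall>s\<in>K. finite s \<and> s \<noteq> {} \<and> (\<forall>t. t \<subseteq> s \<and> t \<noteq> {} \<longrightarrow> t \<in> K))"

definition vertices :: "'v set set \<Rightarrow> 'v set" where
  "vertices K = \<Union>K"

definition principal :: "'v set set \<Rightarrow> 'v set \<Rightarrow> bool" where
  "principal K p \<longleftrightarrow> p \<in> K \<and> \<not> (\<exists>q\<in>K. p \<subset> q)"

definition free :: "'v set set \<Rightarrow> 'v set \<Rightarrow> bool" where
  "free K s \<longleftrightarrow> s \<in> K \<and> (\<exists>p. principal K p \<and> s \<subset> p \<and> (\<forall>q\<in>K. s \<subset> q \<longrightarrow> q = p))"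

definition divided_complex :: "'v set set \<Rightarrow> 'v set \<Rightarrow> bool" where
  "divided_complex K S0 \<longleftrightarrow> simplicial_complex K \<and> S0 \<subseteq> vertices K"

definition assocS :: "'v set set \<Rightarrow> 'v set \<Rightarrow> 'v set set" where
  "assocS K S0 = {s \<in> K. s \<subseteq> S0}"

definition assocC :: "'v set set \<Rightarrow> 'v set \<Rightarrow> 'v set set" where
  "assocC K S0 = {s \<in> K. s \<subseteq> vertices K - S0}"

definition IM :: "'v set set \<Rightarrow> 'v set set \<Rightarrow> 'v set set \<Rightarrow> 'v set set" where
  "IM K C S = {s \<in> K. s \<notin> C \<and> s \<notin> S}"

definition admits_S_collapse :: "'v set set \<Rightarrow> 'v set set \<Rightarrow> 'v set set \<Rightarrow> bool" where
  "admits_S_collapse K C S \<longleftrightarrow>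
     (\<exists>p s. p \<in> S \<and> principal K p \<and> s \<in> K \<and> s \<subseteq> p \<and> free K s)"

definition elem_intermediate_collapse :: "'v set \<Rightarrow> 'v set set \<Rightarrow> 'v set set \<Rightarrow> bool" where
  "elem_intermediate_collapse S0 K K' \<longleftrightarrow>
     (\<exists>s p. p \<in> IM K (assocC K S0) (assocS K S0) \<and> principal K p \<and>
            s \<in> K \<and> s \<subseteq> p \<and> free K s \<and>
            (\<forall>t\<in>assocS K S0. t \<subset> p \<longrightarrow> t \<subset> s) \<and>
            K' = K - {s, p})"

definition intermediate_collapse :: "'v set \<Rightarrow> 'v set set \<Rightarrow> 'v set set \<Rightarrow> bool" where
  "intermediate_collapse S0 = (elem_intermediate_collapse S0)\<^sup>*\<^sup>*"

end

theory Submission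
  imports Defs
begin

lemma free_unique:
  assumes "principal K p" "s \<subseteq> p" "free K s"
  shows "s \<subset> p \<and> (\<forall>q\<in>K. s \<subset> q \<longrightarrow> q = p)"
proof -
  obtain p0 where p0: "principal K p0" "s \<subset> p0" "\<forall>q\<in>K. s \<subset> q \<longrightarrow> q = p0"
    using assms(3) unfolding free_def by blast
  have p0K: "p0 \<in> K" using p0(1) unfolding principal_def by simp
  have pK: "p \<in> K" using assms(1) unfolding principal_def by simp
  have "s \<noteq> p"
  proof
    assume "s = p"
    then have "p \<subset> p0" using p0(2) by simp
    thus False using assms(1) p0K unfolding principal_def by blast
  qed
  hence sp: "s \<subset> p" using assms(2) by (simp add: psubset_eq)
  moreover have "p = p0" using p0(3) pK sp by simp
  ultimately show ?thesis using p0(3) by simp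
qed

definition noS :: "'v set \<Rightarrow> 'v set set \<Rightarrow> bool" where
  "noS S0 K \<longleftrightarrow> \<not> (\<exists>p s. p \<subseteq> S0 \<and> principal K p \<and> s \<subseteq> p \<and> free K s)"

lemma step:
  assumes sc: "simplicial_complex K" and nos: "noS S0 K"
    and pp: "principal K p" and sK: "s \<in> K" and sp: "s \<subseteq> p" and fs: "free K s"
    and iv: "\<forall>t\<in>K. t \<subseteq> S0 \<longrightarrow> t \<subset> p \<longrightarrow> t \<subset> s"
  shows "simplicial_complex (K - {s,p}) \<and> noS S0 (K - {s,p})"
proof -
  have sp': "s \<subset> p" and uq: "\<forall>q\<in>K. s \<subset> q \<longrightarrow> q = p"
    using free_unique[OF pp sp fs] by auto
  have pK: "p \<in> K" using pp unfolding principal_def by simp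
  have pmax: "\<And>q. q \<in> K \<Longrightarrow> \<not> p \<subset> q" using pp unfolding principal_def by simp
  have down: "\<And>x t. x \<in> K \<Longrightarrow> t \<subseteq> x \<Longrightarrow> t \<noteq> {} \<Longrightarrow> t \<in> K"
    using sc unfolding simplicial_complex_def by blast
  have sc2: "simplicial_complex (K - {s,p})"
    unfolding simplicial_complex_def
  proof (intro ballI conjI allI impI)
    fix x assume x: "x \<in> K - {s,p}"
    show "finite x" "x \<noteq> {}" using x sc unfolding simplicial_complex_def by auto
    fix t assume t: "t \<subseteq> x \<and> t \<noteq> {}"
    have xK: "x \<in> K" "x \<noteq> s" "x \<noteq> p" using x by auto
    have "t \<in> K" using down[of x t] xK t by simp
    moreover have "t \<noteq> p"
    proof
      assume "t = p"
      then have "p \<subset> x" using t xK(3) by auto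
      thus False using pmax xK(1) by simp
    qed
    moreover have "t \<noteq> s"
    proof
      assume "t = s"
      then have "s \<subset> x" using t xK(2) by auto
      thus False using uq xK by simp
    qed
    ultimately show "t \<in> K - {s,p}" by simp
  qed
  have "noS S0 (K - {s,p})"
    unfolding noS_def
  proof
    assume "\<exists>p' s'. p' \<subseteq> S0 \<and> principal (K - {s,p}) p' \<and> s' \<subseteq> p' \<and> free (K - {s,p}) s'"
    then obtain p' s' where p'S: "p' \<subseteq> S0" and pp': "principal (K - {s,p}) p'"
      and s'p': "s' \<subseteq> p'" and fs': "free (K - {s,p}) s'" by blast
    have s'lt: "s' \<subset> p'" and uq': "\<forall>q\<in>K - {s,p}. s' \<subset> q \<longrightarrow> q = p'"
      using free_unique[OF pp' s'p' fs'] by auto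
    have p'K: "p' \<in> K" "p' \<noteq> s" "p' \<noteq> p" using pp' unfolding principal_def by auto
    have s'K: "s' \<in> K" "s' \<noteq> s" "s' \<noteq> p" using fs' unfolding free_def by auto
    have uq'': "\<And>q. q \<in> K \<Longrightarrow> q \<noteq> s \<Longrightarrow> q \<noteq> p \<Longrightarrow> s' \<subset> q \<Longrightarrow> q = p'"
      using uq' by simp
    show False
    proof (cases "principal K p'")
      case True
      have p'max: "\<And>q. q \<in> K \<Longrightarrow> \<not> p' \<subset> q" using True unfolding principal_def by simp
      show False
      proof (cases "s' \<subset> p")
        case False
        have nss: "\<not> s' \<subset> s" using False sp' by auto
        have "\<forall>q\<in>K. s' \<subset> q \<longrightarrow> q = p'"
        proof (intro ballI impI)
          fix q assume "q \<in> K" "s' \<subset> q"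
          moreover have "q \<noteq> s" using nss calculation by auto
          moreover have "q \<noteq> p" using False calculation by auto
          ultimately show "q = p'" using uq'' by simp
        qed
        hence "free K s'" unfolding free_def using True s'lt s'K(1) by blast
        thus False using nos p'S True s'p' unfolding noS_def by blast
      next
        case True2: True
        have "s' \<subset> s" using iv s'K(1) s'lt p'S True2 by auto
        then obtain v where v: "v \<in> s" "v \<notin> s'" by auto
        show False
        proof (cases "insert v s' = s")
          case True3: True
          obtain w where w: "w \<in> p" "w \<notin> s" using sp' by auto
          define x where "x = insert w s'"
          have xsub: "x \<subseteq> p" using w True2 x_def by auto
          moreover have "v \<notin> x" using v w x_def by auto
          moreover have "v \<in> p" using v sp' by auto
          ultimately have xp: "x \<subset> p" by auto
          have "x \<in> K" using down[of p x] pK xp x_def by auto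
          moreover have "x \<noteq> s" using w x_def by auto
          moreover have "x \<noteq> p" using xp by auto
          moreover have "s' \<subset> x" using w x_def \<open>s' \<subset> s\<close> by auto
          ultimately have "x = p'" using uq'' by simp
          thus False using p'max xp pK by simp
        next
          case False
          define x where "x = insert v s'"
          have xs: "x \<subset> s" using False v \<open>s' \<subset> s\<close> x_def by auto
          have "x \<in> K" using down[of s x] sK xs x_def by auto
          moreover have "x \<noteq> s" "x \<noteq> p" using xs sp' by auto
          moreover have "s' \<subset> x" using v x_def by auto
          ultimately have "x = p'" using uq'' by simp
          thus False using p'max xs sK by simp
        qed
      qed
    next
      case False
      then obtain q where q: "q \<in> K" "p' \<subset> q" using p'K unfolding principal_def by auto
      have "q = s \<or> q = p"
      proof (rule ccontr)
        assume "\<not> (q = s \<or> q = p)"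
        hence "q \<in> K - {s,p}" using q by simp
        thus False using pp' q(2) unfolding principal_def by blast
      qed
      hence p's: "p' \<subset> s"
      proof
        assume "q = p" thus "p' \<subset> s" using iv p'K(1) p'S q(2) by simp
      qed (use q in simp)
      then obtain v where v: "v \<in> s" "v \<notin> p'" by auto
      obtain u where u: "u \<in> p'" "u \<notin> s'" using s'lt by auto
      define x where "x = insert v s'"
      have "u \<notin> x" using u v x_def by auto
      moreover have "u \<in> s" using u p's by auto
      moreover have "x \<subseteq> s" using v s'lt p's x_def by auto
      ultimately have xs: "x \<subset> s" by auto
      have "x \<in> K" using down[of s x] sK xs x_def by auto
      moreover have "x \<noteq> s" "x \<noteq> p" using xs sp' by auto
      moreover have "s' \<subset> x" using v s'lt x_def by auto
      ultimately have "x = p'" using uq'' by simp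
      thus False using v x_def by auto
    qed
  qed
  thus ?thesis using sc2 by simp
qed

theorem proposition4p15:
  fixes K K' :: "'v set set" and S0 :: "'v set"
  assumes "divided_complex K S0"
    and "\<not> admits_S_collapse K (assocC K S0) (assocS K S0)"
    and "intermediate_collapse S0 K K'"
  shows "\<not> admits_S_collapse K' (assocC K S0) (assocS K S0)"
proof -
  have sc0: "simplicial_complex K" using assms(1) unfolding divided_complex_def by simp
  have nos0: "noS S0 K"
    unfolding noS_def
  proof
    assume "\<exists>p s. p \<subseteq> S0 \<and> principal K p \<and> s \<subseteq> p \<and> free K s"
    then obtain p s where h: "p \<subseteq> S0" "principal K p" "s \<subseteq> p" "free K s" by blast
    have "p \<in> assocS K S0" using h(1,2) unfolding assocS_def principal_def by simp
    moreover have "s \<in> K" using h(4) unfolding free_def by simp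
    ultimately have "admits_S_collapse K (assocC K S0) (assocS K S0)"
      unfolding admits_S_collapse_def using h by blast
    thus False using assms(2) by simp
  qed
  have "simplicial_complex K' \<and> noS S0 K'"
    using assms(3) unfolding intermediate_collapse_def
  proof (induction rule: rtranclp_induct)
    case base
    then show ?case using sc0 nos0 by simp
  next
    case (step y z)
    then obtain s p where h: "principal y p" "s \<in> y" "s \<subseteq> p" "free y s"
      "\<forall>t\<in>assocS y S0. t \<subset> p \<longrightarrow> t \<subset> s" "z = y - {s, p}"
      unfolding elem_intermediate_collapse_def by blast
    have "\<forall>t\<in>y. t \<subseteq> S0 \<longrightarrow> t \<subset> p \<longrightarrow> t \<subset> s"
      using h(5) unfolding assocS_def by simp
    with h step.IH show ?case using Submission.step[of y S0 p s] by simp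
  qed
  show ?thesis
  proof
    assume "admits_S_collapse K' (assocC K S0) (assocS K S0)"
    then obtain p s where h: "p \<in> assocS K S0" "principal K' p" "s \<subseteq> p" "free K' s"
      unfolding admits_S_collapse_def by blast
    have "p \<subseteq> S0" using h(1) unfolding assocS_def by simp
    thus False using h \<open>simplicial_complex K' \<and> noS S0 K'\<close> unfolding noS_def by blast
  qed
qed

end
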